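(* Let $(Z_n)_{n\ge0}$ be a linear fractional Galton–Watson process in i.i.d. random environment (as in the context) which is subcritical, i.e. $R^{(-1)}_\infty<\infty=R_\infty$ a.s. Then $$\Pi_n\,\mathbf{P}^{(n:1)}(Z_n>0)=\frac{1}{\mathbf{E}^{(n:1)}(Z_n\mid Z_n>0)}\ \xrightarrow{n\to\infty}\ \frac{1}{1+R^{(-1)}_\infty}\quad\text{a.s.},$$ and $$\Big\|\mathbf{P}^{(n:1)}(Z_n\in\cdot\mid Z_n>0)-\mathrm{Geom}_+\Big(\frac{1}{1+R^{(-1)}_\infty}\Big)\Big\|\ \xrightarrow{n\to\infty}\ 0\quad\text{a.s.},$$ where $\|\cdot\|$ is the total variation norm.
   Context: Let $(A_n,B_n)_{n\ge1}$ be i.i.d. copies of $(A,B)$ with $\mathbb{P}(A>0,B>0,A+B\ge1)=1$; $e_n=(A_n,B_n)$, $\mathbf{e}=(e_n)_{n\ge1}$. For $a,b>0$, $a+b\ge1$, $LF(a,b)$ is the distribution on $\mathbb{N}_0$ whose generating function $f$ satisfies $1/(1-f(s))=a/(1-s)+b$ for $s\in[0,1)$; equivalently $LF(a,b)=\frac{a+b-1}{a+b}\delta_0+\frac{1}{a+b}\mathrm{Geom}_+(\frac{a}{a+b})$, where $\mathrm{Geom}_+(p)$ is the geometric law on $\{1,2,\dots\}$ with weights $p(1-p)^{k-1}$. $(Z_n)_{n\ge0}$, $Z_0=1$, is a Galton–Watson process in random environment: given $\mathbf{e}$, each individual of generation $n-1$ independently has offspring distribution $LF(A_n,B_n)$.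 $\Pi_0=1$, $\Pi_n=\prod_{k=1}^nA_k$, $R_n=\sum_{k=1}^n\Pi_{k-1}B_k$, $R_\infty=\lim R_n$, $R^{(-1)}_n=\sum_{k=1}^n\Pi_k^{-1}B_k$, $R^{(-1)}_\infty=\lim R^{(-1)}_n$. $\mathbf{P}^{(n:1)},\mathbf{E}^{(n:1)}$ denote the quenched probability/expectation for the process run in the reversed environment $(e_n,e_{n-1},\dots,e_1)$ up to time $n$, i.e. given $(e_1,\dots,e_n)$, individuals of generation $k-1$ ($1\le k\le n$) have offspring law $LF(A_{n-k+1},B_{n-k+1})$. *)

theory Defs
  imports "HOL-Probability.Probability"
begin

definition geom_plus :: "real \<Rightarrow> nat pmf" where
  "geom_plus p = map_pmf Suc (geometric_pmf p)"

definition LF :: "real \<Rightarrow> real \<Rightarrow> nat pmf" where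
  "LF a b = bind_pmf (bernoulli_pmf (1 / (a + b)))
              (\<lambda>c. if c then geom_plus (a / (a + b)) else return_pmf 0)"

fun sum_iid_pmf :: "nat pmf \<Rightarrow> nat \<Rightarrow> nat pmf" where
  "sum_iid_pmf p 0 = return_pmf 0"
| "sum_iid_pmf p (Suc m) = bind_pmf p (\<lambda>x. map_pmf (\<lambda>y. x + y) (sum_iid_pmf p m))"

fun gw_law :: "(nat \<Rightarrow> nat pmf) \<Rightarrow> nat \<Rightarrow> nat pmf" where
  "gw_law L 0 = return_pmf 1"
| "gw_law L (Suc k) = bind_pmf (gw_law L k) (\<lambda>z. sum_iid_pmf (L (Suc k)) z)"

text \<open>Quenched law of Z_n in the reversed environment (e_n,...,e_1):
  generation k-1 (1 <= k <= n) has offspring law LF(A_{n-k+1}, B_{n-k+1}).\<close>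
definition Zrev :: "(nat \<Rightarrow> 'w \<Rightarrow> real) \<Rightarrow> (nat \<Rightarrow> 'w \<Rightarrow> real) \<Rightarrow> nat \<Rightarrow> 'w \<Rightarrow> nat pmf" where
  "Zrev A B n \<omega> = gw_law (\<lambda>k. LF (A (n - k + 1) \<omega>) (B (n - k + 1) \<omega>)) n"

definition Pi_env :: "(nat \<Rightarrow> 'w \<Rightarrow> real) \<Rightarrow> nat \<Rightarrow> 'w \<Rightarrow> real" where
  "Pi_env A n \<omega> = (\<Prod>k\<in>{1..n}. A k \<omega>)"

definition R_env :: "(nat \<Rightarrow> 'w \<Rightarrow> real) \<Rightarrow> (nat \<Rightarrow> 'w \<Rightarrow> real) \<Rightarrow> nat \<Rightarrow> 'w \<Rightarrow> real" where
  "R_env A B n \<omega> = (\<Sum>k\<in>{1..n}. Pi_env A (k - 1) \<omega> * B k \<omega>)"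

definition Rinv_env :: "(nat \<Rightarrow> 'w \<Rightarrow> real) \<Rightarrow> (nat \<Rightarrow> 'w \<Rightarrow> real) \<Rightarrow> nat \<Rightarrow> 'w \<Rightarrow> real" where
  "Rinv_env A B n \<omega> = (\<Sum>k\<in>{1..n}. B k \<omega> / Pi_env A k \<omega>)"

definition Rinv_inf :: "(nat \<Rightarrow> 'w \<Rightarrow> real) \<Rightarrow> (nat \<Rightarrow> 'w \<Rightarrow> real) \<Rightarrow> 'w \<Rightarrow> real" where
  "Rinv_inf A B \<omega> = lim (\<lambda>n. Rinv_env A B n \<omega>)"

text \<open>Total variation norm of the difference of two laws on nat
  (convention: sum of absolute differences of point masses).\<close>
definition tv_dist :: "nat pmf \<Rightarrow> nat pmf \<Rightarrow> real" where
  "tv_dist p q = (\<Sum>k. \<bar>pmf p k - pmf q k\<bar>)"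

end

theory Submission
  imports Defs
begin


definition G :: "nat pmf \<Rightarrow> real \<Rightarrow> ennreal" where
  "G p s = (\<integral>\<^sup>+x. ennreal (s ^ x) \<partial>measure_pmf p)"

lemma G_return: "G (return_pmf k) s = ennreal (s ^ k)"
  by (simp add: G_def)

lemma G_bind: "G (bind_pmf p f) s = (\<integral>\<^sup>+x. G (f x) s \<partial>measure_pmf p)"
  by (simp add: G_def)

lemma G_sum_iid: "0 \<le> s \<Longrightarrow> G (sum_iid_pmf p m) s = G p s ^ m"
proof (induction m)
  case 0 then show ?case by (simp add: G_return)
next
  case (Suc m)
  have "G (sum_iid_pmf p (Suc m)) s =
     (\<integral>\<^sup>+x. (\<integral>\<^sup>+y. ennreal (s ^ x) * ennreal (s ^ y) \<partial>measure_pmf (sum_iid_pmf p m)) \<partial>measure_pmf p)"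
    using Suc.prems by (simp add: G_def power_add ennreal_mult)
  also have "\<dots> = (\<integral>\<^sup>+x. ennreal (s ^ x) * G (sum_iid_pmf p m) s \<partial>measure_pmf p)"
    by (simp add: G_def nn_integral_cmult)
  also have "\<dots> = G p s * G (sum_iid_pmf p m) s"
    by (simp add: G_def nn_integral_multc)
  finally show ?case using Suc by (simp add: mult.commute)
qed

lemma G_geometric:
  assumes "0 < p" "p \<le> 1" "0 \<le> s" "s \<le> 1"
  shows "G (geometric_pmf p) s = ennreal (p / (1 - (1 - p) * s))"
proof -
  have lt: "\<bar>(1 - p) * s\<bar> < 1"
  proof -
    have "(1 - p) * s \<le> (1 - p)" using assms by (simp add: mult_left_le)
    moreover have "0 \<le> (1 - p) * s" using assms by simp
    ultimately show ?thesis using assms by linarith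
  qed
  have "G (geometric_pmf p) s = (\<Sum>x. ennreal (p * ((1 - p) * s) ^ x))"
    using assms by (simp add: G_def nn_integral_measure_pmf nn_integral_count_space_nat
        ennreal_mult[symmetric] power_mult_distrib mult_ac)
  also have "\<dots> = ennreal (p * (1 / (1 - (1 - p) * s)))"
    using assms lt by (intro suminf_ennreal_eq sums_mult geometric_sums) auto
  finally show ?thesis by simp
qed



definition h :: "real \<Rightarrow> real \<Rightarrow> real \<Rightarrow> real" where
  "h a b s = 1 - (1 - s) / (a + b - b * s)"

lemma h_range:
  assumes "0 < a" "0 \<le> b" "1 \<le> a + b" "0 \<le> s" "s \<le> 1"
  shows "0 \<le> h a b s" "h a b s \<le> 1"
proof -
  have D: "a + b - b * s \<ge> a" using assms by (simp add: mult_left_le)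
  have "1 - s \<le> a + b - b * s"
  proof -
    have "(1 - s) \<le> (a + b) * (1 - s)" using mult_right_mono[of 1 "a+b" "1-s"] assms by simp
    also have "\<dots> \<le> a + b * (1 - s)" using assms by (simp add: algebra_simps mult_left_le)
    finally show ?thesis by (simp add: algebra_simps)
  qed
  then have "(1 - s) / (a + b - b * s) \<le> 1" using D assms by (simp add: divide_le_eq)
  then show "0 \<le> h a b s" by (simp add: h_def)
  show "h a b s \<le> 1" using D assms by (simp add: h_def)
qed

lemma h_comp:
  assumes "0 < a" "0 \<le> b" "1 \<le> a + b" "0 < c" "0 \<le> d" "1 \<le> c + d" "0 \<le> s" "s \<le> 1"
  shows "h a b (h c d s) = h (a * c) (a * d + b) s"
proof -
  have D: "c + d - d * s \<ge> c" using assms by (simp add: mult_left_le)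
  have "0 \<le> (a * d + b) * (1 - s)" using assms by simp
  then have D2: "a * c + (a * d + b) - (a * d + b) * s \<ge> a * c"
    by (simp add: algebra_simps)
  have "a*c > 0" using assms by simp
  define D1 where "D1 = c + d - d * s"
  define D2 where "D2 = a * c + (a * d + b) - (a * d + b) * s"
  define u where "u = (1 - s) / D1"
  have D1: "D1 > 0" using D assms by (simp add: D1_def)
  have D2p: "D2 > 0" using D2 \<open>a*c>0\<close> by (simp add: D2_def)
  have E: "a + b - b * (1 - u) = D2 / D1"
    using D1 by (simp add: u_def D2_def D1_def field_simps)
  have "u / (a + b - b * (1 - u)) = (1 - s) / D2"
    unfolding E using D1 D2p by (simp add: u_def)
  then show ?thesis unfolding h_def D1_def[symmetric] u_def[symmetric]
    by (simp add: D2_def)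
qed

lemma geom_plus_G:
  assumes "0 < p" "p \<le> 1" "0 \<le> s" "s \<le> 1"
  shows "G (geom_plus p) s = ennreal (s * (p / (1 - (1 - p) * s)))"
proof -
  have "G (geom_plus p) s = (\<integral>\<^sup>+x. ennreal s * ennreal (s ^ x) \<partial>measure_pmf (geometric_pmf p))"
    using assms by (simp add: G_def geom_plus_def ennreal_mult)
  also have "\<dots> = ennreal s * G (geometric_pmf p) s"
    by (simp add: G_def nn_integral_cmult)
  moreover have "0 < 1 - (1 - p) * s"
  proof -
    have "(1 - p) * s \<le> 1 - p" using assms by (simp add: mult_left_le)
    then show ?thesis using assms by linarith
  qed
  then have "0 \<le> p / (1 - (1 - p) * s)" using assms by simp
  then have "ennreal s * ennreal (p / (1 - (1 - p) * s)) = ennreal (s * (p / (1 - (1 - p) * s)))"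
    using assms by (intro ennreal_mult[symmetric]) auto
  ultimately show ?thesis using assms G_geometric by simp
qed

lemma G_LF:
  assumes "0 < a" "0 \<le> b" "1 \<le> a + b" "0 \<le> s" "s \<le> 1"
  shows "G (LF a b) s = ennreal (h a b s)"
proof -
  define q where "q = 1 / (a + b)"
  define p where "p = a / (a + b)"
  have q: "0 \<le> q" "q \<le> 1" using assms by (auto simp: q_def)
  have p: "0 < p" "p \<le> 1" using assms by (auto simp: p_def)
  have 1: "G (LF a b) s = G (geom_plus p) s * ennreal q + G (return_pmf 0) s * ennreal (1 - q)"
    unfolding LF_def G_bind q_def[symmetric] p_def[symmetric]
    using q by (subst nn_integral_bernoulli_pmf) auto
  have den: "0 < 1 - (1 - p) * s"
  proof -
    have "(1 - p) * s \<le> 1 - p" using p assms by (simp add: mult_left_le)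
    then show ?thesis using p by linarith
  qed
  define X where "X = s * (p / (1 - (1 - p) * s))"
  have X: "0 \<le> X" using den p assms by (simp add: X_def)
  have 2: "G (geom_plus p) s = ennreal X" using p assms by (simp add: geom_plus_G X_def)
  have 3: "G (return_pmf 0) s = 1" by (simp add: G_return)
  have 4: "G (LF a b) s = ennreal (X * q + (1 - q))"
    unfolding 1 2 3 using X q by (simp add: ennreal_mult ennreal_plus)
  have D: "a + b - b * s \<ge> a" using assms by (simp add: mult_left_le)
  have 5: "1 - (1 - p) * s = (a + b - b * s) / (a + b)" using assms by (simp add: p_def field_simps)
  have Ep: "a + b - b * s \<noteq> 0" "a + b \<noteq> 0" using D assms by auto
  have 8: "(a / (a + b)) / ((a + b - b * s) / (a + b)) = a / (a + b - b * s)" using Ep by simp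
  have 9: "p / (1 - (1 - p) * s) = a / (a + b - b * s)"
    by (subst 5) (simp only: p_def 8)
  have 7: "X = s * a / (a + b - b * s)" unfolding X_def 9 by simp
  have gen: "s * a / E * (1 / c) + (1 - 1 / c) = 1 - (1 - s) / E"
    if "E \<noteq> 0" "c \<noteq> 0" "s * a - E = s * c - c" for E c
  proof -
    have "s * a / E * (1 / c) + (1 - 1 / c) = (s*a + E*c - E)/(E*c)"
      using that by (simp add: field_simps)
    also have "s*a + E*c - E = E*c - c + s*c" using that(3) by linarith
    also have "(E*c - c + s*c)/(E*c) = 1 - (1 - s) / E"
      using that by (simp add: field_simps)
    finally show ?thesis .
  qed
  have 6: "X * q + (1 - q) = h a b s"
    unfolding 7 h_def q_def using Ep by (intro gen) (auto simp: algebra_simps)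
  show ?thesis using 4 6 by simp
qed



lemma coeff_zero:
  fixes c :: "nat \<Rightarrow> real"
  assumes bd: "\<And>k. \<bar>c k\<bar> \<le> 1"
    and sm: "\<And>s. 0 < s \<Longrightarrow> s < 1 \<Longrightarrow> (\<lambda>k. c k * s ^ k) sums 0"
  shows "c k = 0"
proof (induction k rule: less_induct)
  case (less k)
  define f where "f x = (\<Sum>n. c (n + k) * x ^ n)" for x :: real
  have fs: "(\<lambda>n. c (n + k) * x ^ n) sums f x" if "norm x < 1" for x :: real
  proof -
    have "summable (\<lambda>n. c (n + k) * x ^ n)"
    proof (rule summable_comparison_test)
      show "\<exists>N. \<forall>n\<ge>N. norm (c (n + k) * x ^ n) \<le> \<bar>x\<bar> ^ n"
        using bd by (auto simp: abs_mult power_abs intro!: mult_left_le_one_le)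
      show "summable (\<lambda>n. \<bar>x\<bar> ^ n)" using that by (intro summable_geometric) simp
    qed
    then show ?thesis unfolding f_def by (rule summable_sums)
  qed
  have lim: "(f \<longlongrightarrow> c k) (at 0)"
    using powser_limit_0[of 1 "\<lambda>n. c (n + k)" f] fs by simp
  have zero: "f x = 0" if "0 < x" "x < 1" for x
  proof -
    have "(\<lambda>i. c (i + k) * x ^ (i + k)) sums (0 - (\<Sum>i<k. c i * x ^ i))"
      using sm[OF that] by (subst sums_iff_shift) simp
    moreover have "(\<Sum>i<k. c i * x ^ i) = 0" using less.IH by simp
    ultimately have "(\<lambda>i. x ^ k * (c (i + k) * x ^ i)) sums 0"
      by (simp add: power_add mult_ac)
    moreover have "(\<lambda>i. x ^ k * (c (i + k) * x ^ i)) sums (x ^ k * f x)"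
      using fs[of x] that by (intro sums_mult) simp
    ultimately have "x ^ k * f x = 0" using sums_unique2 by blast
    then show ?thesis using that by simp
  qed
  have l1: "(f \<longlongrightarrow> c k) (at_right 0)"
    using lim by (rule filterlim_mono) (auto simp: at_within_le_at)
  have "eventually (\<lambda>x. f x = 0) (at_right (0::real))"
    unfolding eventually_at_right_field by (intro exI[of _ 1]) (auto intro: zero)
  then have l2: "(f \<longlongrightarrow> 0) (at_right 0)"
    by (rule tendsto_eventually)
  show ?case using tendsto_unique[OF _ l1 l2] by simp
qed

lemma G_sums:
  assumes "0 \<le> s" "s < 1"
  shows "(\<lambda>k. pmf p k * s ^ k) sums (\<Sum>k. pmf p k * s ^ k)"
    "G p s = ennreal (\<Sum>k. pmf p k * s ^ k)"
proof -
  have "summable (\<lambda>k. pmf p k * s ^ k)"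
  proof (rule summable_comparison_test)
    show "\<exists>N. \<forall>n\<ge>N. norm (pmf p n * s ^ n) \<le> s ^ n"
      using assms by (auto simp: abs_mult intro!: mult_left_le_one_le pmf_le_1)
    show "summable (\<lambda>n. s ^ n)" using assms by (intro summable_geometric) simp
  qed
  then show "(\<lambda>k. pmf p k * s ^ k) sums (\<Sum>k. pmf p k * s ^ k)" by (rule summable_sums)
  have "G p s = (\<Sum>k. ennreal (pmf p k * s ^ k))"
    using assms by (simp add: G_def nn_integral_measure_pmf nn_integral_count_space_nat ennreal_mult)
  also have "\<dots> = ennreal (\<Sum>k. pmf p k * s ^ k)"
    using assms \<open>summable _\<close> by (intro suminf_ennreal2) auto
  finally show "G p s = ennreal (\<Sum>k. pmf p k * s ^ k)" .
qed

lemma G_unique: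
  assumes "\<And>s. 0 < s \<Longrightarrow> s < 1 \<Longrightarrow> G p s = G q s"
  shows "p = q"
proof (rule pmf_eqI)
  fix k
  have "pmf p k - pmf q k = 0"
  proof (rule coeff_zero[where c = "\<lambda>k. pmf p k - pmf q k"])
    fix k show "\<bar>pmf p k - pmf q k\<bar> \<le> 1"
      using pmf_le_1[of p k] pmf_le_1[of q k] pmf_nonneg[of p k] pmf_nonneg[of q k] by linarith
  next
    fix s :: real assume s: "0 < s" "s < 1"
    have e: "(\<Sum>k. pmf p k * s ^ k) = (\<Sum>k. pmf q k * s ^ k)"
    proof -
      have "ennreal (\<Sum>k. pmf p k * s ^ k) = ennreal (\<Sum>k. pmf q k * s ^ k)"
        using G_sums(2)[of s p] G_sums(2)[of s q] assms[OF s] s by simp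
      moreover have "0 \<le> (\<Sum>k. pmf p k * s ^ k)" "0 \<le> (\<Sum>k. pmf q k * s ^ k)"
        using G_sums(1)[of s] s by (auto intro!: suminf_nonneg sums_summable)
      ultimately show ?thesis by simp
    qed
    show "(\<lambda>k. (pmf p k - pmf q k) * s ^ k) sums 0"
      using sums_diff[OF G_sums(1)[of s p] G_sums(1)[of s q]] s e by (simp add: left_diff_distrib)
  qed
  then show "pmf p k = pmf q k" by simp
qed

lemma LF_comp:
  assumes "0 < a" "0 \<le> b" "1 \<le> a + b" "0 < c" "0 \<le> d" "1 \<le> c + d"
  shows "bind_pmf (LF a b) (\<lambda>z. sum_iid_pmf (LF c d) z) = LF (a * c) (a * d + b)"
proof (rule G_unique)
  fix s :: real assume s: "0 < s" "s < 1"
  have hr: "0 \<le> h c d s" "h c d s \<le> 1" using h_range[of c d s] assms s by auto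
  have "G (bind_pmf (LF a b) (\<lambda>z. sum_iid_pmf (LF c d) z)) s
      = (\<integral>\<^sup>+z. ennreal (h c d s ^ z) \<partial>measure_pmf (LF a b))"
    using assms s hr by (simp add: G_bind G_sum_iid G_LF ennreal_power)
  also have "\<dots> = G (LF a b) (h c d s)" by (simp add: G_def)
  also have "\<dots> = ennreal (h a b (h c d s))" using hr assms by (simp add: G_LF)
  also have "h a b (h c d s) = h (a * c) (a * d + b) s" using assms s by (intro h_comp) auto
  also have "ennreal (h (a * c) (a * d + b) s) = G (LF (a * c) (a * d + b)) s"
  proof -
    have "0 \<le> a * d" using assms by simp
    moreover have "a \<le> a * (c + d)" using assms mult_left_mono[of 1 "c+d" a] by simp
    ultimately show ?thesis using assms s by (subst G_LF) (auto simp: algebra_simps)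
  qed
  finally show "G (bind_pmf (LF a b) (\<lambda>z. sum_iid_pmf (LF c d) z)) s = G (LF (a * c) (a * d + b)) s" .
qed



lemma LF_1_0: "LF 1 0 = return_pmf 1"
proof (rule G_unique)
  fix s :: real assume s: "0 < s" "s < 1"
  then show "G (LF 1 0) s = G (return_pmf 1) s" by (simp add: G_LF G_return h_def)
qed

lemma Pi_Suc: "Pi_env A (Suc j) \<omega> = Pi_env A j \<omega> * A (Suc j) \<omega>"
  unfolding Pi_env_def by (subst prod.nat_ivl_Suc') auto

lemma Pi_pos: "(\<And>k. 1 \<le> k \<Longrightarrow> k \<le> j \<Longrightarrow> A k \<omega> > 0) \<Longrightarrow> Pi_env A j \<omega> > 0"
  unfolding Pi_env_def by (intro prod_pos) auto

lemma gw_rev: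
  fixes A B :: "nat \<Rightarrow> 'w \<Rightarrow> real"
  assumes pos: "\<And>k. 1 \<le> k \<Longrightarrow> k \<le> n \<Longrightarrow> A k \<omega> > 0 \<and> B k \<omega> > 0 \<and> A k \<omega> + B k \<omega> \<ge> 1"
  defines "S \<equiv> \<lambda>j. (\<Sum>m\<in>{Suc j..n}. B m \<omega> / Pi_env A m \<omega>)"
  shows "k \<le> n \<Longrightarrow> gw_law (\<lambda>k. LF (A (n - k + 1) \<omega>) (B (n - k + 1) \<omega>)) k
           = LF (Pi_env A n \<omega> / Pi_env A (n - k) \<omega>) (Pi_env A n \<omega> * S (n - k))
         \<and> 1 \<le> Pi_env A n \<omega> / Pi_env A (n - k) \<omega> + Pi_env A n \<omega> * S (n - k)"
proof (induction k)
  case 0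
  have "Pi_env A n \<omega> > 0" using pos by (intro Pi_pos) auto
  then show ?case by (simp add: S_def LF_1_0)
next
  case (Suc k)
  define j where "j = n - Suc k"
  have nk: "n - k = Suc j" "n - Suc k + 1 = Suc j" "Suc j \<le> n" using Suc.prems by (auto simp: j_def)
  have Pj: "Pi_env A j \<omega> > 0" "Pi_env A (Suc j) \<omega> > 0" "Pi_env A n \<omega> > 0"
    using pos nk by (auto intro!: Pi_pos)
  have S_nn: "S i \<ge> 0" for i
    unfolding S_def
  proof (rule sum_nonneg)
    fix m assume "m \<in> {Suc i..n}"
    then have "B m \<omega> > 0" "Pi_env A m \<omega> > 0" using pos by (auto intro!: Pi_pos)
    then show "0 \<le> B m \<omega> / Pi_env A m \<omega>" by simp
  qed
  define \<alpha> where "\<alpha> = Pi_env A n \<omega> / Pi_env A (Suc j) \<omega>"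
  define \<beta> where "\<beta> = Pi_env A n \<omega> * S (Suc j)"
  have IH: "gw_law (\<lambda>k. LF (A (n - k + 1) \<omega>) (B (n - k + 1) \<omega>)) k = LF \<alpha> \<beta>" "1 \<le> \<alpha> + \<beta>"
    using Suc.IH Suc.prems nk by (auto simp: \<alpha>_def \<beta>_def)
  have ab: "0 < \<alpha>" "0 \<le> \<beta>" using Pj S_nn by (auto simp: \<alpha>_def \<beta>_def)
  have cd: "0 < A (Suc j) \<omega>" "0 < B (Suc j) \<omega>" "1 \<le> A (Suc j) \<omega> + B (Suc j) \<omega>"
    using pos[of "Suc j"] nk by auto
  have step: "gw_law (\<lambda>k. LF (A (n - k + 1) \<omega>) (B (n - k + 1) \<omega>)) (Suc k)
      = LF (\<alpha> * A (Suc j) \<omega>) (\<alpha> * B (Suc j) \<omega> + \<beta>)"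
    using IH ab cd nk by (simp add: LF_comp)
  have e1: "\<alpha> * A (Suc j) \<omega> = Pi_env A n \<omega> / Pi_env A (n - Suc k) \<omega>"
    using Pj cd by (simp add: \<alpha>_def Pi_Suc j_def[symmetric])
  have Ssplit: "S j = B (Suc j) \<omega> / Pi_env A (Suc j) \<omega> + S (Suc j)"
    unfolding S_def using nk by (subst sum.atLeast_Suc_atMost) auto
  have e2: "\<alpha> * B (Suc j) \<omega> + \<beta> = Pi_env A n \<omega> * S (n - Suc k)"
    unfolding j_def[symmetric] Ssplit by (simp add: \<alpha>_def \<beta>_def algebra_simps)
  have "\<alpha> + \<beta> \<le> \<alpha> * A (Suc j) \<omega> + (\<alpha> * B (Suc j) \<omega> + \<beta>)"
    using mult_left_mono[OF cd(3), of \<alpha>] ab by (simp add: algebra_simps)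
  then show ?case using step e1 e2 IH(2) by simp
qed

lemma Zrev_LF:
  fixes A B :: "nat \<Rightarrow> 'w \<Rightarrow> real"
  assumes pos: "\<And>k. 1 \<le> k \<Longrightarrow> k \<le> n \<Longrightarrow> A k \<omega> > 0 \<and> B k \<omega> > 0 \<and> A k \<omega> + B k \<omega> \<ge> 1"
  shows "Zrev A B n \<omega> = LF (Pi_env A n \<omega>) (Pi_env A n \<omega> * Rinv_env A B n \<omega>)"
    "1 \<le> Pi_env A n \<omega> + Pi_env A n \<omega> * Rinv_env A B n \<omega>"
  using gw_rev[where k=n and n=n and A=A and B=B and \<omega>=\<omega>, OF pos] by (auto simp: Zrev_def Rinv_env_def Pi_env_def)



lemma pmf_geom_plus:
  assumes "0 < p" "p \<le> 1"
  shows "pmf (geom_plus p) k = (if k = 0 then 0 else (1 - p) ^ (k - 1) * p)"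
proof (cases k)
  case 0
  have "0 \<notin> set_pmf (geom_plus p)" by (auto simp: geom_plus_def)
  then show ?thesis using 0 by (simp add: set_pmf_iff)
next
  case (Suc j)
  then show ?thesis using assms
    by (simp add: geom_plus_def pmf_map_inj'[where f=Suc, OF inj_Suc])
qed

lemma pmf_LF:
  assumes "0 < a" "0 \<le> b" "1 \<le> a + b"
  shows "pmf (LF a b) k = (if k = 0 then 1 - 1 / (a + b) else 1 / (a + b) * pmf (geom_plus (a / (a + b))) k)"
proof -
  have q: "0 \<le> 1 / (a + b)" "1 / (a + b) \<le> 1" using assms by auto
  have p: "0 < a / (a + b)" "a / (a + b) \<le> 1" using assms by auto
  show ?thesis unfolding LF_def pmf_bind using q p
    by (auto simp: pmf_geom_plus)
qed

lemma prob_LF_pos: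
  assumes "0 < a" "0 \<le> b" "1 \<le> a + b"
  shows "measure_pmf.prob (LF a b) {k. k > 0} = 1 / (a + b)"
proof -
  have "{k::nat. k > 0} = UNIV - {0}" by auto
  moreover have "measure_pmf.prob (LF a b) (UNIV - {0}) = 1 - measure_pmf.prob (LF a b) {0}"
    using measure_pmf.prob_compl[of "{0}" "LF a b"] by simp
  ultimately have "measure_pmf.prob (LF a b) {k. k > 0} = 1 - pmf (LF a b) 0"
    by (simp add: measure_pmf_single)
  then show ?thesis using pmf_LF[OF assms, of 0] by simp
qed

lemma cond_LF:
  assumes "0 < a" "0 \<le> b" "1 \<le> a + b"
  shows "cond_pmf (LF a b) {k. k > 0} = geom_plus (a / (a + b))"
proof -
  have p: "0 < a / (a + b)" "a / (a + b) \<le> 1" using assms by auto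
  have "pmf (LF a b) 1 > 0" using pmf_LF[OF assms, of 1] p assms by (simp add: pmf_geom_plus)
  then have "(1::nat) \<in> set_pmf (LF a b)" by (simp add: set_pmf_iff)
  then have ne: "set_pmf (LF a b) \<inter> {k. k > 0} \<noteq> {}" by blast
  show ?thesis
  proof (rule pmf_eqI)
    fix k
    show "pmf (cond_pmf (LF a b) {k. k > 0}) k = pmf (geom_plus (a / (a + b))) k"
      using assms p by (simp add: pmf_cond[OF ne] prob_LF_pos pmf_LF pmf_geom_plus)
  qed
qed

lemma expect_geom_plus:
  assumes "0 < p" "p \<le> 1"
  shows "measure_pmf.expectation (geom_plus p) real = 1 / p"
proof -
  have "measure_pmf.expectation (geom_plus p) real
      = measure_pmf.expectation (geometric_pmf p) (\<lambda>x. 1 + real x)"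
    by (simp add: geom_plus_def)
  also have "\<dots> = 1 + measure_pmf.expectation (geometric_pmf p) real"
    using integrable_real_geometric_pmf[of p] assms by (subst Bochner_Integration.integral_add) auto
  also have "\<dots> = 1 / p" using assms by (simp add: expectation_geometric_pmf field_simps)
  finally show ?thesis .
qed

lemma abs_geom_sums:
  fixes x y :: real
  assumes "0 \<le> x" "x < 1" "0 \<le> y" "y < 1"
  shows "(\<lambda>k. \<bar>x ^ k - y ^ k\<bar>) sums \<bar>1 / (1 - x) - 1 / (1 - y)\<bar>"
proof (cases "y \<le> x")
  case True
  have "(\<lambda>k. x ^ k - y ^ k) sums (1 / (1 - x) - 1 / (1 - y))"
    using assms by (intro sums_diff geometric_sums) auto
  moreover have "\<bar>x ^ k - y ^ k\<bar> = x ^ k - y ^ k" for k using True assms by (simp add: power_mono)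
  moreover have "1 / (1 - y) \<le> 1 / (1 - x)" using True assms by (simp add: frac_le)
  ultimately show ?thesis by simp
next
  case False
  have "(\<lambda>k. y ^ k - x ^ k) sums (1 / (1 - y) - 1 / (1 - x))"
    using assms by (intro sums_diff geometric_sums) auto
  moreover have "\<bar>x ^ k - y ^ k\<bar> = y ^ k - x ^ k" for k using False assms by (simp add: power_mono)
  moreover have "1 / (1 - x) \<le> 1 / (1 - y)" using False assms by (simp add: frac_le)
  ultimately show ?thesis by simp
qed

lemma tv_geom_bound:
  assumes "0 < p" "p \<le> 1" "0 < q" "q \<le> 1"
  shows "0 \<le> tv_dist (geom_plus q) (geom_plus p)"
    "tv_dist (geom_plus q) (geom_plus p) \<le> q * \<bar>1 / q - 1 / p\<bar> + \<bar>q - p\<bar> / p"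
proof -
  define f where "f k = \<bar>pmf (geom_plus q) k - pmf (geom_plus p) k\<bar>" for k
  define g where "g k = q * \<bar>(1 - q) ^ k - (1 - p) ^ k\<bar> + (1 - p) ^ k * \<bar>q - p\<bar>" for k
  have gs: "g sums (q * \<bar>1 / (1 - (1 - q)) - 1 / (1 - (1 - p))\<bar> + 1 / (1 - (1 - p)) * \<bar>q - p\<bar>)"
    unfolding g_def using assms
    by (intro sums_add sums_mult sums_mult2 abs_geom_sums geometric_sums) auto
  have fS: "f (Suc k) = \<bar>q * ((1 - q) ^ k - (1 - p) ^ k) + (1 - p) ^ k * (q - p)\<bar>" for k
    unfolding f_def using assms by (simp add: pmf_geom_plus algebra_simps)
  have fle: "f (Suc k) \<le> g k" for k
  proof -
    have "f (Suc k) \<le> \<bar>q * ((1 - q) ^ k - (1 - p) ^ k)\<bar> + \<bar>(1 - p) ^ k * (q - p)\<bar>"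
      unfolding fS by (rule abs_triangle_ineq)
    also have "\<dots> = g k" unfolding g_def using assms by (simp add: abs_mult)
    finally show ?thesis .
  qed
  have fnn: "0 \<le> f k" for k by (simp add: f_def)
  have smS: "summable (\<lambda>k. f (Suc k))"
    by (rule summable_comparison_test[OF _ sums_summable[OF gs]]) (use fle fnn in auto)
  then have sm: "summable f" by (simp add: summable_Suc_iff)
  have f0: "f 0 = 0" unfolding f_def using assms by (simp add: pmf_geom_plus)
  have "tv_dist (geom_plus q) (geom_plus p) = suminf f" by (simp add: tv_dist_def f_def[abs_def])
  also have "\<dots> = (\<Sum>k. f (Suc k))" using suminf_split_head[OF sm] f0 by simp
  finally have tv: "tv_dist (geom_plus q) (geom_plus p) = (\<Sum>k. f (Suc k))" .
  show "0 \<le> tv_dist (geom_plus q) (geom_plus p)" unfolding tv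
    using smS fnn by (intro suminf_nonneg) auto
  have "(\<Sum>k. f (Suc k)) \<le> suminf g"
    using smS sums_summable[OF gs] fle by (intro suminf_le) auto
  also have "suminf g = q * \<bar>1 / q - 1 / p\<bar> + \<bar>q - p\<bar> / p" using sums_unique[OF gs] by simp
  finally show "tv_dist (geom_plus q) (geom_plus p) \<le> q * \<bar>1 / q - 1 / p\<bar> + \<bar>q - p\<bar> / p"
    unfolding tv .
qed



lemma det:
  fixes A B :: "nat \<Rightarrow> 'w \<Rightarrow> real"
  assumes pos: "\<forall>k. 1 \<le> k \<longrightarrow> A k \<omega> > 0 \<and> B k \<omega> > 0 \<and> A k \<omega> + B k \<omega> \<ge> 1"
    and conv: "convergent (\<lambda>n. Rinv_env A B n \<omega>)"
  shows "(\<forall>n. Pi_env A n \<omega> * measure_pmf.prob (Zrev A B n \<omega>) {k. k > 0}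
            = 1 / measure_pmf.expectation (cond_pmf (Zrev A B n \<omega>) {k. k > 0}) real)
    \<and> ((\<lambda>n. Pi_env A n \<omega> * measure_pmf.prob (Zrev A B n \<omega>) {k. k > 0})
            \<longlonglongrightarrow> 1 / (1 + Rinv_inf A B \<omega>))
    \<and> ((\<lambda>n. tv_dist (cond_pmf (Zrev A B n \<omega>) {k. k > 0})
                     (geom_plus (1 / (1 + Rinv_inf A B \<omega>)))) \<longlonglongrightarrow> 0)"
proof -
  define R where "R n = Rinv_env A B n \<omega>" for n
  define Rl where "Rl = Rinv_inf A B \<omega>"
  have Rnn: "R n \<ge> 0" for n
    unfolding R_def Rinv_env_def
  proof (rule sum_nonneg)
    fix m assume "m \<in> {1..n}"
    then have "B m \<omega> > 0" "Pi_env A m \<omega> > 0" using pos by (auto intro!: Pi_pos)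
    then show "0 \<le> B m \<omega> / Pi_env A m \<omega>" by simp
  qed
  have Rlim: "R \<longlonglongrightarrow> Rl"
    using conv unfolding Rl_def Rinv_inf_def R_def[abs_def] by (simp add: convergent_LIMSEQ_iff)
  have Rlnn: "Rl \<ge> 0" using LIMSEQ_le_const[OF Rlim] Rnn by auto
  have eqs: "Pi_env A n \<omega> * measure_pmf.prob (Zrev A B n \<omega>) {k. k > 0} = 1 / (1 + R n)
     \<and> cond_pmf (Zrev A B n \<omega>) {k. k > 0} = geom_plus (1 / (1 + R n))" for n
  proof -
    have p': "\<And>k. 1 \<le> k \<Longrightarrow> k \<le> n \<Longrightarrow> A k \<omega> > 0 \<and> B k \<omega> > 0 \<and> A k \<omega> + B k \<omega> \<ge> 1"
      using pos by auto
    define a where "a = Pi_env A n \<omega>"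
    have a: "a > 0" unfolding a_def using pos by (intro Pi_pos) auto
    have Z: "Zrev A B n \<omega> = LF a (a * R n)" "1 \<le> a + a * R n"
      using Zrev_LF[where A=A and B=B and n=n and \<omega>=\<omega>, OF p'] by (auto simp: a_def R_def)
    have b: "0 \<le> a * R n" using a Rnn[of n] by simp
    have "a + a * R n = a * (1 + R n)" by (simp add: algebra_simps)
    then have e: "a / (a + a * R n) = 1 / (1 + R n)" using a Rnn[of n] by simp
    show ?thesis unfolding Z(1) a_def[symmetric]
      using prob_LF_pos[OF a b Z(2)] cond_LF[OF a b Z(2)] e by simp
  qed
  have c1: "\<forall>n. Pi_env A n \<omega> * measure_pmf.prob (Zrev A B n \<omega>) {k. k > 0}
            = 1 / measure_pmf.expectation (cond_pmf (Zrev A B n \<omega>) {k. k > 0}) real"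
  proof
    fix n
    have "0 < 1 / (1 + R n)" "1 / (1 + R n) \<le> 1" using Rnn[of n] by auto
    then show "Pi_env A n \<omega> * measure_pmf.prob (Zrev A B n \<omega>) {k. k > 0}
            = 1 / measure_pmf.expectation (cond_pmf (Zrev A B n \<omega>) {k. k > 0}) real"
      using eqs[of n] by (simp add: expect_geom_plus)
  qed
  have qlim: "(\<lambda>n. 1 / (1 + R n)) \<longlonglongrightarrow> 1 / (1 + Rl)"
    using Rlnn by (intro tendsto_intros Rlim) auto
  have c2: "(\<lambda>n. Pi_env A n \<omega> * measure_pmf.prob (Zrev A B n \<omega>) {k. k > 0})
            \<longlonglongrightarrow> 1 / (1 + Rl)"
    using qlim eqs by simp
  define p where "p = 1 / (1 + Rl)"
  have p: "0 < p" "p \<le> 1" using Rlnn by (auto simp: p_def)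
  define q where "q n = 1 / (1 + R n)" for n
  have q: "0 < q n" "q n \<le> 1" for n using Rnn[of n] by (auto simp: q_def)
  have qlim': "q \<longlonglongrightarrow> p" using qlim unfolding q_def[abs_def] p_def .
  have blim: "(\<lambda>n. q n * \<bar>1 / q n - 1 / p\<bar> + \<bar>q n - p\<bar> / p) \<longlonglongrightarrow> p * \<bar>1 / p - 1 / p\<bar> + \<bar>p - p\<bar> / p"
    using p by (intro tendsto_intros qlim') auto
  have c3: "(\<lambda>n. tv_dist (geom_plus (q n)) (geom_plus p)) \<longlonglongrightarrow> 0"
  proof (rule tendsto_sandwich[of "\<lambda>_. 0" _ _ "\<lambda>n. q n * \<bar>1 / q n - 1 / p\<bar> + \<bar>q n - p\<bar> / p"])
    show "\<forall>\<^sub>F n in sequentially. 0 \<le> tv_dist (geom_plus (q n)) (geom_plus p)"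
      using tv_geom_bound(1)[OF p q] by simp
    show "\<forall>\<^sub>F n in sequentially. tv_dist (geom_plus (q n)) (geom_plus p)
           \<le> q n * \<bar>1 / q n - 1 / p\<bar> + \<bar>q n - p\<bar> / p"
      using tv_geom_bound(2)[OF p q] by simp
  qed (use blim in auto)
  show ?thesis
    using c1 c2 c3 eqs unfolding Rl_def p_def q_def by simp
qed

theorem theorem3p1:
  fixes M :: "'w measure" and A B :: "nat \<Rightarrow> 'w \<Rightarrow> real"
  assumes "prob_space M"
    and meas: "\<And>n. A n \<in> borel_measurable M" "\<And>n. B n \<in> borel_measurable M"
    and indep: "prob_space.indep_vars M (\<lambda>_. borel) (\<lambda>n \<omega>. (A n \<omega>, B n \<omega>)) {1..}"
    and ident: "\<And>n. n \<ge> 1 \<Longrightarrow>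
        distr M borel (\<lambda>\<omega>. (A n \<omega>, B n \<omega>)) = distr M borel (\<lambda>\<omega>. (A 1 \<omega>, B 1 \<omega>))"
    and valid: "\<And>n. n \<ge> 1 \<Longrightarrow>
        AE \<omega> in M. A n \<omega> > 0 \<and> B n \<omega> > 0 \<and> A n \<omega> + B n \<omega> \<ge> 1"
    and sub1: "AE \<omega> in M. convergent (\<lambda>n. Rinv_env A B n \<omega>)"
    and sub2: "AE \<omega> in M. filterlim (\<lambda>n. R_env A B n \<omega>) at_top sequentially"
  shows "AE \<omega> in M.
      (\<forall>n. Pi_env A n \<omega> * measure_pmf.prob (Zrev A B n \<omega>) {k. k > 0}
            = 1 / measure_pmf.expectation (cond_pmf (Zrev A B n \<omega>) {k. k > 0}) real)
    \<and> ((\<lambda>n. Pi_env A n \<omega> * measure_pmf.prob (Zrev A B n \<omega>) {k. k > 0})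
            \<longlonglongrightarrow> 1 / (1 + Rinv_inf A B \<omega>))
    \<and> ((\<lambda>n. tv_dist (cond_pmf (Zrev A B n \<omega>) {k. k > 0})
                     (geom_plus (1 / (1 + Rinv_inf A B \<omega>)))) \<longlonglongrightarrow> 0)"
proof -
  have pos: "AE \<omega> in M. \<forall>k. 1 \<le> k \<longrightarrow> A k \<omega> > 0 \<and> B k \<omega> > 0 \<and> A k \<omega> + B k \<omega> \<ge> 1"
    unfolding AE_all_countable
  proof
    fix k :: nat
    show "AE \<omega> in M. 1 \<le> k \<longrightarrow> A k \<omega> > 0 \<and> B k \<omega> > 0 \<and> A k \<omega> + B k \<omega> \<ge> 1"
    proof (cases "1 \<le> k")
      case True
      then show ?thesis using valid[OF True] by simp
    next
      case False
      then show ?thesis by simp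
    qed
  qed
  show ?thesis using pos sub1 by eventually_elim (rule det)
qed

end
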